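(* Every $n\times n$ Gram-Lorentz matrix $X$ is completely positive semidefinite, and $$\mathrm{cpsd}\text{-}\mathrm{rank}(X)\le 2^{\lfloor(\mathrm{rank}(X)+1)/2\rfloor}.$$
   Context: The $m$-dimensional Lorentz cone is $\mathcal{L}_m:=\{(c,x)\in\mathbb{R}\times\mathbb{R}^{m-1}: c\ge\|x\|\}$. An $n\times n$ real symmetric matrix $X$ is Gram-Lorentz if there exist $m\ge1$ and vectors $\ell_1,\dots,\ell_n\in\mathcal{L}_m$ with $X_{ij}=\langle\ell_i,\ell_j\rangle$ for all $i,j$. An $n\times n$ matrix $X$ is completely positive semidefinite (cpsd) if there exist $d\ge1$ and Hermitian positive semidefinite $d\times d$ matrices $P_1,\dots,P_n$ with $X_{ij}=\mathrm{Tr}(P_iP_j)$ for all $i,j$; the cpsd-rank of $X$ is the least such $d$. *)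

theory Defs
  imports Complex_Main "Jordan_Normal_Form.DL_Rank" "Jordan_Normal_Form.Schur_Decomposition"
begin

text \<open>The m-dimensional Lorentz cone, vectors in R^m given as JNF vectors of dimension m;
  coordinate 0 is c, coordinates 1..m-1 are x.\<close>
definition lorentz_cone :: "nat \<Rightarrow> real vec set" where
  "lorentz_cone m = {l. l \<in> carrier_vec m \<and> 0 < m \<and>
      sqrt (\<Sum>i\<in>{1..<m}. (l $ i)^2) \<le> l $ 0}"

definition gram_lorentz :: "nat \<Rightarrow> real mat \<Rightarrow> bool" where
  "gram_lorentz n X \<longleftrightarrow> X \<in> carrier_mat n n \<and> X = transpose_mat X \<and>
     (\<exists>m \<ge> 1. \<exists>l :: nat \<Rightarrow> real vec.
        (\<forall>i<n. l i \<in> lorentz_cone m) \<and>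
        (\<forall>i<n. \<forall>j<n. X $$ (i,j) = l i \<bullet> l j))"

definition herm_psd :: "nat \<Rightarrow> complex mat \<Rightarrow> bool" where
  "herm_psd d P \<longleftrightarrow> P \<in> carrier_mat d d \<and>
     (\<forall>i<d. \<forall>j<d. P $$ (i,j) = cnj (P $$ (j,i))) \<and>
     (\<forall>v \<in> carrier_vec d. 0 \<le> Re (\<Sum>i<d. \<Sum>j<d. cnj (v $ i) * P $$ (i,j) * v $ j))"

definition cpsd_factor :: "nat \<Rightarrow> nat \<Rightarrow> real mat \<Rightarrow> bool" where
  "cpsd_factor n d X \<longleftrightarrow> 1 \<le> d \<and> (\<exists>P :: nat \<Rightarrow> complex mat.
      (\<forall>i<n. herm_psd d (P i)) \<and>
      (\<forall>i<n. \<forall>j<n. complex_of_real (X $$ (i,j)) = (\<Sum>k<d. (P i * P j) $$ (k,k))))"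

definition cpsd :: "nat \<Rightarrow> real mat \<Rightarrow> bool" where
  "cpsd n X \<longleftrightarrow> X \<in> carrier_mat n n \<and> (\<exists>d. cpsd_factor n d X)"

definition cpsd_rank :: "nat \<Rightarrow> real mat \<Rightarrow> nat" where
  "cpsd_rank n X = (LEAST d. cpsd_factor n d X)"

end

theory Submission
  imports Defs
begin


lemma rank_span_cols:
  fixes X :: "real mat"
  assumes X: "X \<in> carrier_mat n n"
  shows "\<exists>S. finite S \<and> S \<subseteq> set (cols X) \<and> card S = vec_space.rank n X \<and>
     (\<forall>i<n. \<exists>a. \<forall>k<n. X $$ (k,i) = (\<Sum>v\<in>S. a v * v $ k))"
proof -
  interpret V: vec_space "TYPE(real)" n .
  have cc: "set (cols X) \<subseteq> carrier_vec n" using X cols_dim by blast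
  obtain S where S: "maximal S (\<lambda>T. T \<subseteq> set (cols X) \<and> V.lin_indpt T)"
    using maximal_exists[of "(\<lambda>T. T \<subseteq> set (cols X) \<and> V.lin_indpt T)" "card (set (cols X))" "{}"]
    by (meson List.finite_set card_mono empty_iff empty_subsetI V.finite_lin_indpt2 rev_finite_subset)
  have rk: "V.rank X = card S" using V.rank_card_indpt[OF X S] .
  have Ssub: "S \<subseteq> set (cols X)" and Sli: "V.lin_indpt S" using S unfolding maximal_def by auto
  have finS: "finite S" using Ssub finite_subset by blast
  have Sc: "S \<subseteq> carrier_vec n" using Ssub cc by blast
  have inspan: "v \<in> V.span S" if v: "v \<in> set (cols X)" for v
  proof (cases "v \<in> S")
    case True then show ?thesis using V.span_mem[OF Sc] by auto
  next
    case False
    have "\<not> V.lin_indpt (S \<union> {v})"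
    proof
      assume "V.lin_indpt (S \<union> {v})"
      then have "S \<union> {v} = S" using S v Ssub unfolding maximal_def by blast
      then show False using False by blast
    qed
    then show ?thesis using V.lin_dep_iff_in_span[OF Sc Sli _ False] v cc by auto
  qed
  have main: "\<exists>a. \<forall>k<n. X $$ (k,i) = (\<Sum>v\<in>S. a v * v $ k)" if i: "i < n" for i
  proof -
    have "col X i \<in> set (cols X)" using i X by (simp add: cols_def)
    then obtain a where a: "V.lincomb a S = col X i"
      using V.finite_in_span[OF finS _ inspan] Sc by auto
    show ?thesis
    proof (intro exI allI impI)
      fix k assume k: "k < n"
      have "X $$ (k,i) = col X i $ k" using X i k by simp
      also have "\<dots> = (\<Sum>v\<in>S. a v * v $ k)" unfolding a[symmetric]
        using V.lincomb_index[OF k Sc] .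
      finally show "X $$ (k,i) = (\<Sum>v\<in>S. a v * v $ k)" .
    qed
  qed
  show ?thesis using finS Ssub rk main by auto
qed


lemma sum_sq_zero:
  fixes f :: "nat \<Rightarrow> real"
  assumes "(\<Sum>a<m. f a * f a) = 0" "a < m"
  shows "f a = 0"
proof -
  have "\<forall>a\<in>{..<m}. f a * f a = 0"
    using sum_nonneg_eq_0_iff[of "{..<m}" "\<lambda>a. f a * f a"] assms(1) by auto
  then show ?thesis using assms(2) by auto
qed

lemma sum_only_one:
  fixes f :: "nat \<Rightarrow> real"
  assumes "t < k" "\<And>s. s < k \<Longrightarrow> s \<noteq> t \<Longrightarrow> f s = 0"
  shows "(\<Sum>s<k. f s) = f t"
proof -
  have "(\<Sum>s<k. f s) = f t + (\<Sum>s\<in>{..<k}-{t}. f s)"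
    using assms(1) by (simp add: sum.remove)
  also have "(\<Sum>s\<in>{..<k}-{t}. f s) = 0" using assms(2) by (intro sum.neutral) auto
  finally show ?thesis by simp
qed

lemma gs:
  fixes w :: "nat \<Rightarrow> nat \<Rightarrow> real"
  shows "\<exists>u \<gamma>. (\<forall>s<k. \<forall>t<k. s \<noteq> t \<longrightarrow> (\<Sum>a<m. u s a * u t a) = 0) \<and>
              (\<forall>j<k. \<forall>a<m. w j a = (\<Sum>t<k. \<gamma> j t * u t a))"
proof (induction k)
  case 0
  then show ?case by auto
next
  case (Suc k)
  then obtain u \<gamma> where orth: "\<And>s t. s<k \<Longrightarrow> t<k \<Longrightarrow> s \<noteq> t \<Longrightarrow> (\<Sum>a<m. u s a * u t a) = 0"
     and sp: "\<And>j a. j<k \<Longrightarrow> a<m \<Longrightarrow> w j a = (\<Sum>t<k. \<gamma> j t * u t a)" by blast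
  define coef where "coef t = (\<Sum>a<m. w k a * u t a) / (\<Sum>a<m. u t a * u t a)" for t
  define nk where "nk a = w k a - (\<Sum>t<k. coef t * u t a)" for a
  define u' where "u' = u(k := nk)"
  define \<gamma>' where "\<gamma>' j t = (if j < k then (if t < k then \<gamma> j t else 0) else (if t < k then coef t else 1))" for j t
  have key: "(\<Sum>a<m. nk a * u t a) = 0" if t: "t < k" for t
  proof -
    have "(\<Sum>a<m. nk a * u t a) = (\<Sum>a<m. w k a * u t a) - (\<Sum>a<m. \<Sum>t'<k. coef t' * (u t' a * u t a))"
      unfolding nk_def by (simp add: algebra_simps sum_subtractf sum_distrib_left sum_distrib_right)
    also have "(\<Sum>a<m. \<Sum>t'<k. coef t' * (u t' a * u t a)) = (\<Sum>t'<k. coef t' * (\<Sum>a<m. u t' a * u t a))"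
      by (subst sum.swap) (simp add: sum_distrib_left)
    also have "\<dots> = coef t * (\<Sum>a<m. u t a * u t a)"
      by (rule sum_only_one[OF t]) (simp add: orth t)
    also have "(\<Sum>a<m. w k a * u t a) - coef t * (\<Sum>a<m. u t a * u t a) = 0"
    proof (cases "(\<Sum>a<m. u t a * u t a) = 0")
      case True
      then have "\<And>a. a < m \<Longrightarrow> u t a = 0" using sum_sq_zero by blast
      then have "(\<Sum>a<m. w k a * u t a) = 0" by simp
      then show ?thesis using True by simp
    next
      case False
      then show ?thesis unfolding coef_def by simp
    qed
    finally show ?thesis .
  qed
  show ?case
  proof (intro exI conjI allI impI)
    fix s t assume st: "s < Suc k" "t < Suc k" "s \<noteq> t"
    show "(\<Sum>a<m. u' s a * u' t a) = 0"
    proof (cases "s = k")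
      case True
      then have "t < k" using st by auto
      then show ?thesis using key True st by (simp add: u'_def)
    next
      case False
      then have s: "s < k" using st by auto
      show ?thesis
      proof (cases "t = k")
        case True
        then show ?thesis using key[OF s] s by (simp add: u'_def mult.commute)
      next
        case False
        then show ?thesis using s st orth by (simp add: u'_def)
      qed
    qed
  next
    fix j a assume ja: "j < Suc k" "a < m"
    show "w j a = (\<Sum>t<Suc k. \<gamma>' j t * u' t a)"
    proof (cases "j = k")
      case True
      have "(\<Sum>t<Suc k. \<gamma>' j t * u' t a) = (\<Sum>t<k. coef t * u t a) + nk a"
        using True by (simp add: \<gamma>'_def u'_def)
      then show ?thesis using True unfolding nk_def by simp
    next
      case False
      then have "j < k" using ja by auto
      then show ?thesis using sp[OF _ ja(2)] by (simp add: \<gamma>'_def u'_def)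
    qed
  qed
qed



lemma gram_span:
  fixes L :: "nat \<Rightarrow> nat \<Rightarrow> real" and S :: "'b set" and f :: "'b \<Rightarrow> nat" and \<alpha> :: "'b \<Rightarrow> real"
  assumes fin: "finite S" and ind: "\<And>v. v\<in>S \<Longrightarrow> f v < n" and i: "i < n"
  and h: "\<And>k. k<n \<Longrightarrow> (\<Sum>a<m. L k a * L i a) = (\<Sum>v\<in>S. \<alpha> v * (\<Sum>a<m. L k a * L (f v) a))"
  and a: "a < m"
  shows "L i a = (\<Sum>v\<in>S. \<alpha> v * L (f v) a)"
proof -
  define D where "D a = L i a - (\<Sum>v\<in>S. \<alpha> v * L (f v) a)" for a
  have orth: "(\<Sum>a<m. L k a * D a) = 0" if k: "k < n" for k
  proof -
    have "(\<Sum>a<m. L k a * D a) = (\<Sum>a<m. L k a * L i a) - (\<Sum>a<m. \<Sum>v\<in>S. \<alpha> v * (L k a * L (f v) a))"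
      unfolding D_def by (simp add: algebra_simps sum_subtractf sum_distrib_left)
    also have "(\<Sum>a<m. \<Sum>v\<in>S. \<alpha> v * (L k a * L (f v) a)) = (\<Sum>v\<in>S. \<alpha> v * (\<Sum>a<m. L k a * L (f v) a))"
      by (subst sum.swap) (simp add: sum_distrib_left)
    finally show ?thesis using h[OF k] by simp
  qed
  have "(\<Sum>a<m. D a * D a) = (\<Sum>a<m. L i a * D a) - (\<Sum>a<m. \<Sum>v\<in>S. \<alpha> v * (L (f v) a * D a))"
    unfolding D_def[of a] by (simp add: D_def algebra_simps sum_subtractf sum_distrib_left sum_distrib_right)
  also have "(\<Sum>a<m. \<Sum>v\<in>S. \<alpha> v * (L (f v) a * D a)) = (\<Sum>v\<in>S. \<alpha> v * (\<Sum>a<m. L (f v) a * D a))"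
    by (subst sum.swap) (simp add: sum_distrib_left)
  also have "\<dots> = 0" using orth ind by simp
  finally have "(\<Sum>a<m. D a * D a) = 0" using orth[OF i] by simp
  then have "D a = 0" using sum_sq_zero a by blast
  then show ?thesis unfolding D_def by simp
qed

lemma orth_coords:
  fixes u :: "nat \<Rightarrow> nat \<Rightarrow> real"
  assumes orth: "\<And>s t. s<k \<Longrightarrow> t<k \<Longrightarrow> s \<noteq> t \<Longrightarrow> (\<Sum>a<m. u s a * u t a) = 0"
  and x1: "\<And>a. a<m \<Longrightarrow> x1 a = (\<Sum>t<k. b1 t * u t a)"
  and x2: "\<And>a. a<m \<Longrightarrow> x2 a = (\<Sum>t<k. b2 t * u t a)"
  shows "(\<Sum>a<m. x1 a * x2 a) = (\<Sum>t<k. b1 t * b2 t * (\<Sum>a<m. u t a * u t a))"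
proof -
  have "(\<Sum>a<m. x1 a * x2 a) = (\<Sum>a<m. \<Sum>t<k. \<Sum>s<k. b1 t * b2 s * (u t a * u s a))"
    using x1 x2 by (simp add: sum_product algebra_simps)
  also have "\<dots> = (\<Sum>t<k. \<Sum>a<m. \<Sum>s<k. b1 t * b2 s * (u t a * u s a))" by (rule sum.swap)
  also have "\<dots> = (\<Sum>t<k. \<Sum>s<k. \<Sum>a<m. b1 t * b2 s * (u t a * u s a))"
    by (intro sum.cong refl sum.swap)
  also have "\<dots> = (\<Sum>t<k. \<Sum>s<k. b1 t * b2 s * (\<Sum>a<m. u t a * u s a))"
    by (simp add: sum_distrib_left)
  also have "\<dots> = (\<Sum>t<k. b1 t * b2 t * (\<Sum>a<m. u t a * u t a))"
  proof (rule sum.cong[OF refl])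
    fix t assume "t \<in> {..<k}"
    then show "(\<Sum>s<k. b1 t * b2 s * (\<Sum>a<m. u t a * u s a)) = b1 t * b2 t * (\<Sum>a<m. u t a * u t a)"
      by (intro sum_only_one) (auto simp: orth)
  qed
  finally show ?thesis .
qed



definition Idf :: "nat \<Rightarrow> nat \<Rightarrow> complex" where "Idf a b = (if a = b then 1 else 0)"
definition Zp :: "nat \<Rightarrow> nat \<Rightarrow> complex" where
  "Zp i j = (if i = 0 \<and> j = 0 then 1 else if i = 1 \<and> j = 1 then -1 else 0)"
definition Xp :: "nat \<Rightarrow> nat \<Rightarrow> complex" where
  "Xp i j = (if i = 0 \<and> j = 1 then 1 else if i = 1 \<and> j = 0 then 1 else 0)"
definition Yp :: "nat \<Rightarrow> nat \<Rightarrow> complex" where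
  "Yp i j = (if i = 0 \<and> j = 1 then -\<i> else if i = 1 \<and> j = 0 then \<i> else 0)"

definition tens :: "nat \<Rightarrow> (nat\<Rightarrow>nat\<Rightarrow>complex) \<Rightarrow> (nat\<Rightarrow>nat\<Rightarrow>complex) \<Rightarrow> nat \<Rightarrow> nat \<Rightarrow> complex" where
  "tens D Q R a b = Q (a div D) (b div D) * R (a mod D) (b mod D)"

definition mm :: "nat \<Rightarrow> (nat\<Rightarrow>nat\<Rightarrow>complex) \<Rightarrow> (nat\<Rightarrow>nat\<Rightarrow>complex) \<Rightarrow> nat \<Rightarrow> nat \<Rightarrow> complex" where
  "mm D A B a e = (\<Sum>b<D. A a b * B b e)"

definition herm :: "(nat\<Rightarrow>nat\<Rightarrow>complex) \<Rightarrow> bool" where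
  "herm A \<longleftrightarrow> (\<forall>a b. cnj (A a b) = A b a)"

fun gens :: "nat \<Rightarrow> nat \<Rightarrow> nat \<Rightarrow> nat \<Rightarrow> complex" where
  "gens 0 t = (\<lambda>a b. 0)"
| "gens (Suc p) t = tens (2^p) (if t < 2*p then Zp else if t = 2*p then Xp else Yp)
                                (if t < 2*p then gens p t else Idf)"

lemma sum_double:
  fixes g :: "nat \<Rightarrow> 'a::comm_monoid_add"
  shows "(\<Sum>b<2*D. g b) = (\<Sum>b<D. g b) + (\<Sum>b<D. g (D + b))"
proof -
  have "{..<2*D} = {..<D} \<union> {D..<D+D}" by auto
  then have "(\<Sum>b<2*D. g b) = sum g ({..<D} \<union> {D..<D+D})" by simp
  also have "\<dots> = (\<Sum>b<D. g b) + (\<Sum>b\<in>{D..<D+D}. g b)"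
    by (rule sum.union_disjoint) auto
  also have "(\<Sum>b\<in>{D..<D+D}. g b) = (\<Sum>b<D. g (D + b))"
    using sum.shift_bounds_nat_ivl[of g 0 D D] by (simp add: atLeast0LessThan add.commute)
  finally show ?thesis .
qed


lemma mm_tens:
  assumes D: "0 < D"
  shows "mm (2*D) (tens D Q1 R1) (tens D Q2 R2) a e =
     (Q1 (a div D) 0 * Q2 0 (e div D) + Q1 (a div D) 1 * Q2 1 (e div D)) * mm D R1 R2 (a mod D) (e mod D)"
  unfolding mm_def sum_double tens_def using D
  by (simp add: algebra_simps sum_distrib_left sum.distrib)

lemma tr_tens:
  assumes D: "0 < D"
  shows "(\<Sum>a<2*D. tens D Q R a a) = (Q 0 0 + Q 1 1) * (\<Sum>a<D. R a a)"
  unfolding sum_double tens_def using D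
  by (simp add: algebra_simps sum_distrib_left sum.distrib)

lemma herm_tens: "herm Q \<Longrightarrow> herm R \<Longrightarrow> herm (tens D Q R)"
  unfolding herm_def tens_def by simp

lemma herm_basic: "herm Idf" "herm Zp" "herm Xp" "herm Yp"
  unfolding herm_def Idf_def Zp_def Xp_def Yp_def by auto

lemma herm_gens: "herm (gens p t)"
proof (induction p)
  case 0 show ?case by (simp add: herm_def)
next
  case (Suc p) show ?case unfolding gens.simps
    by (intro herm_tens) (auto simp: herm_basic Suc)
qed

lemma mm_Idf_left: "a < D \<Longrightarrow> mm D Idf A a e = A a e"
proof -
  assume a: "a < D"
  have "mm D Idf A a e = (\<Sum>b<D. if a = b then A b e else 0)"
    unfolding mm_def Idf_def by (rule sum.cong) auto
  also have "\<dots> = A a e" using a by (simp add: sum.delta)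
  finally show ?thesis .
qed

lemma mm_Idf_right: "e < D \<Longrightarrow> mm D A Idf a e = A a e"
proof -
  assume a: "e < D"
  have "mm D A Idf a e = (\<Sum>b<D. if b = e then A a b else 0)"
    unfolding mm_def Idf_def by (rule sum.cong) auto
  also have "\<dots> = A a e" using a by (simp add: sum.delta')
  finally show ?thesis .
qed

lemma eq_divmod: "(a::nat) = e \<longleftrightarrow> a div D = e div D \<and> a mod D = e mod D"
  by (metis div_mult_mod_eq)

lemma lt2: "(i::nat) < 2 \<Longrightarrow> i = 0 \<or> i = 1" by auto

theorem gens_props:
  "(\<forall>s<2*p. \<forall>t<2*p. \<forall>a<2^p. \<forall>e<2^p.
      mm (2^p) (gens p s) (gens p t) a e + mm (2^p) (gens p t) (gens p s) a e
       = (if s = t \<and> a = e then 2 else 0)) \<and>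
   (\<forall>t<2*p. (\<Sum>a<2^p. gens p t a a) = 0)"
proof (induction p)
  case 0
  then show ?case by simp
next
  case (Suc p)
  define D :: nat where "D = 2^p"
  have D: "0 < D" by (simp add: D_def)
  have DD: "(2::nat)^Suc p = 2 * D" by (simp add: D_def)
  from Suc have IHac: "\<And>s t a e. s<2*p \<Longrightarrow> t<2*p \<Longrightarrow> a<D \<Longrightarrow> e<D \<Longrightarrow>
      mm D (gens p s) (gens p t) a e + mm D (gens p t) (gens p s) a e
       = (if s = t \<and> a = e then 2 else 0)"
    and IHtr: "\<And>t. t<2*p \<Longrightarrow> (\<Sum>a<D. gens p t a a) = 0" unfolding D_def by auto
  show ?case
  proof (intro conjI allI impI)
    fix s t a e :: nat assume st: "s < 2 * Suc p" "t < 2 * Suc p" and ae: "a < 2^Suc p" "e < 2^Suc p"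
    have ha: "a div D < 2" "e div D < 2" using ae DD by (auto simp: less_mult_imp_div_less)
    have la: "a mod D < D" "e mod D < D" using D by auto
    show "mm (2^Suc p) (gens (Suc p) s) (gens (Suc p) t) a e + mm (2^Suc p) (gens (Suc p) t) (gens (Suc p) s) a e
       = (if s = t \<and> a = e then 2 else 0)"
    proof (cases "s < 2*p \<and> t < 2*p")
      case True
      have zz: "Zp (a div D) 0 * Zp 0 (e div D) + Zp (a div D) 1 * Zp 1 (e div D) = Idf (a div D) (e div D)"
        using lt2[OF ha(1)] lt2[OF ha(2)] by (auto simp: Zp_def Idf_def)
      have "mm (2^Suc p) (gens (Suc p) s) (gens (Suc p) t) a e + mm (2^Suc p) (gens (Suc p) t) (gens (Suc p) s) a e
         = (Zp (a div D) 0 * Zp 0 (e div D) + Zp (a div D) 1 * Zp 1 (e div D)) *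
           (mm D (gens p s) (gens p t) (a mod D) (e mod D) + mm D (gens p t) (gens p s) (a mod D) (e mod D))"
        unfolding DD gens.simps D_def[symmetric] mm_tens[OF D] using True by (simp add: algebra_simps)
      also have "\<dots> = Idf (a div D) (e div D) * (if s = t \<and> a mod D = e mod D then 2 else 0)"
        unfolding zz using IHac[OF _ _ la, of s t] True by simp
      also have "\<dots> = (if s = t \<and> a = e then 2 else 0)"
        by (subst eq_divmod[of a e D]) (auto simp: Idf_def)
      finally show ?thesis .
    next
      case False
      show ?thesis
      unfolding DD gens.simps D_def[symmetric] mm_tens[OF D]
      using lt2[OF ha(1)] lt2[OF ha(2)] st la False
      apply (subst eq_divmod[of a e D])
      apply (cases "s < 2*p"; cases "t < 2*p"; cases "s = 2*p"; cases "t = 2*p")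
      by (auto simp: Zp_def Xp_def Yp_def Idf_def mm_Idf_left mm_Idf_right algebra_simps)
    qed
  next
    fix t :: nat assume t: "t < 2 * Suc p"
    show "(\<Sum>a<2 ^ Suc p. gens (Suc p) t a a) = 0"
      unfolding DD gens.simps D_def[symmetric] tr_tens[OF D]
      using IHtr by (auto simp: Zp_def Xp_def Yp_def)
  qed
qed



definition Mf :: "(nat \<Rightarrow> nat \<Rightarrow> nat \<Rightarrow> complex) \<Rightarrow> nat \<Rightarrow> (nat \<Rightarrow> real) \<Rightarrow> nat \<Rightarrow> nat \<Rightarrow> complex" where
  "Mf G k y a b = (\<Sum>t<k. complex_of_real (y t) * G t a b)"

lemma mm_Mf: "mm d (Mf G k y) (Mf G k z) a e = (\<Sum>t<k. \<Sum>u<k. complex_of_real (y t * z u) * mm d (G t) (G u) a e)"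
proof -
  have "mm d (Mf G k y) (Mf G k z) a e = (\<Sum>b<d. \<Sum>t<k. \<Sum>u<k. complex_of_real (y t * z u) * (G t a b * G u b e))"
    unfolding mm_def Mf_def sum_product by (intro sum.cong refl) (simp add: algebra_simps)
  also have "\<dots> = (\<Sum>t<k. \<Sum>b<d. \<Sum>u<k. complex_of_real (y t * z u) * (G t a b * G u b e))"
    by (rule sum.swap)
  also have "\<dots> = (\<Sum>t<k. \<Sum>u<k. \<Sum>b<d. complex_of_real (y t * z u) * (G t a b * G u b e))"
    by (rule sum.cong[OF refl], rule sum.swap)
  also have "\<dots> = (\<Sum>t<k. \<Sum>u<k. complex_of_real (y t * z u) * mm d (G t) (G u) a e)"
    unfolding mm_def by (simp add: sum_distrib_left)
  finally show ?thesis .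
qed

lemma herm_Mf: "(\<And>t. herm (G t)) \<Longrightarrow> herm (Mf G k y)"
  unfolding herm_def Mf_def by simp

locale cliff =
  fixes G :: "nat \<Rightarrow> nat \<Rightarrow> nat \<Rightarrow> complex" and d K :: nat
  assumes hermG: "\<And>t. herm (G t)"
  and acG: "\<And>s t a e. s<K \<Longrightarrow> t<K \<Longrightarrow> a<d \<Longrightarrow> e<d \<Longrightarrow>
      mm d (G s) (G t) a e + mm d (G t) (G s) a e = (if s = t \<and> a = e then 2 else 0)"
  and trG: "\<And>t. t<K \<Longrightarrow> (\<Sum>a<d. G t a a) = 0"
begin

lemma ac_Mf:
  assumes k: "k \<le> K" and ae: "a < d" "e < d"
  shows "mm d (Mf G k y) (Mf G k z) a e + mm d (Mf G k z) (Mf G k y) a e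
     = (if a = e then 2 * complex_of_real (\<Sum>t<k. y t * z t) else 0)"
proof -
  have "mm d (Mf G k z) (Mf G k y) a e = (\<Sum>u<k. \<Sum>t<k. complex_of_real (z u * y t) * mm d (G u) (G t) a e)"
    by (rule mm_Mf)
  also have "\<dots> = (\<Sum>t<k. \<Sum>u<k. complex_of_real (y t * z u) * mm d (G u) (G t) a e)"
    by (rule trans[OF sum.swap]) (intro sum.cong refl, simp add: mult.commute)
  finally have 2: "mm d (Mf G k z) (Mf G k y) a e = \<dots>" .
  have "mm d (Mf G k y) (Mf G k z) a e + mm d (Mf G k z) (Mf G k y) a e
     = (\<Sum>t<k. \<Sum>u<k. complex_of_real (y t * z u) * (mm d (G t) (G u) a e + mm d (G u) (G t) a e))"
    unfolding 2 mm_Mf[of d G k y z] by (simp add: sum.distrib algebra_simps)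
  also have "\<dots> = (\<Sum>t<k. \<Sum>u<k. complex_of_real (y t * z u) * (if t = u \<and> a = e then 2 else 0))"
    using k ae by (intro sum.cong refl) (simp add: acG)
  also have "\<dots> = (\<Sum>t<k. if a = e then 2 * complex_of_real (y t * z t) else 0)"
  proof (rule sum.cong[OF refl])
    fix t assume t: "t \<in> {..<k}"
    have "(\<Sum>u<k. complex_of_real (y t * z u) * (if t = u \<and> a = e then 2 else 0))
       = (\<Sum>u<k. if t = u then (if a = e then 2 * complex_of_real (y t * z u) else 0) else 0)"
      by (intro sum.cong refl) auto
    also have "\<dots> = (if a = e then 2 * complex_of_real (y t * z t) else 0)"
      using t by (simp add: sum.delta)
    finally show "(\<Sum>u<k. complex_of_real (y t * z u) * (if t = u \<and> a = e then 2 else 0)) = \<dots>" .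
  qed
  also have "\<dots> = (if a = e then 2 * complex_of_real (\<Sum>t<k. y t * z t) else 0)"
    by (simp add: sum_distrib_left)
  finally show ?thesis .
qed

lemma tr_Mf:
  assumes k: "k \<le> K"
  shows "(\<Sum>a<d. Mf G k y a a) = 0"
proof -
  have "(\<Sum>a<d. Mf G k y a a) = (\<Sum>t<k. complex_of_real (y t) * (\<Sum>a<d. G t a a))"
    unfolding Mf_def by (subst sum.swap) (simp add: sum_distrib_left)
  also have "\<dots> = 0" using k trG by simp
  finally show ?thesis .
qed

end



definition nr :: "nat \<Rightarrow> (nat \<Rightarrow> complex) \<Rightarrow> real" where
  "nr d f = (\<Sum>a<d. (cmod (f a))^2)"

lemma nr_eq: "complex_of_real (nr d f) = (\<Sum>a<d. cnj (f a) * f a)"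
  unfolding nr_def of_real_sum by (intro sum.cong refl) (metis complex_norm_square mult.commute)

lemma nr_nonneg: "0 \<le> nr d f" unfolding nr_def by (simp add: sum_nonneg)

lemma nr_zero: "nr d f = 0 \<Longrightarrow> a < d \<Longrightarrow> f a = 0"
  unfolding nr_def using sum_nonneg_eq_0_iff[of "{..<d}" "\<lambda>a. (cmod (f a))^2"] by auto

lemma psd_core:
  fixes M :: "nat \<Rightarrow> nat \<Rightarrow> complex" and v :: "nat \<Rightarrow> complex" and s c :: real
  assumes hM: "herm M"
    and sq: "\<And>a e. a<d \<Longrightarrow> e<d \<Longrightarrow> mm d M M a e = (if a = e then complex_of_real (s^2) else 0)"
    and s: "0 \<le> s" "s \<le> c"
  shows "0 \<le> Re (\<Sum>a<d. \<Sum>b<d. cnj (v a) * ((if a = b then complex_of_real c else 0) + M a b) * v b)"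
proof -
  define w where "w a = (\<Sum>b<d. M a b * v b)" for a
  define Q where "Q = (\<Sum>a<d. cnj (v a) * w a)"
  have hc: "cnj (M a b) = M b a" for a b using hM unfolding herm_def by auto
  have 1: "(\<Sum>a<d. \<Sum>b<d. cnj (v a) * ((if a = b then complex_of_real c else 0) + M a b) * v b)
      = complex_of_real c * complex_of_real (nr d v) + Q"
  proof -
    have "(\<Sum>a<d. \<Sum>b<d. cnj (v a) * ((if a = b then complex_of_real c else 0) + M a b) * v b)
      = (\<Sum>a<d. complex_of_real c * (cnj (v a) * v a) + cnj (v a) * w a)"
    proof (rule sum.cong[OF refl])
      fix a assume a: "a \<in> {..<d}"
      have ww: "(\<Sum>b<d. cnj (v a) * (M a b * v b)) = cnj (v a) * w a"
        unfolding w_def by (simp add: sum_distrib_left)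
      have "(\<Sum>b<d. cnj (v a) * ((if a = b then complex_of_real c else 0) + M a b) * v b)
         = (\<Sum>b<d. (if a = b then complex_of_real c * (cnj (v a) * v a) else 0)) + (\<Sum>b<d. cnj (v a) * (M a b * v b))"
        unfolding sum.distrib[symmetric] by (intro sum.cong refl) (auto simp: algebra_simps)
      also have "\<dots> = complex_of_real c * (cnj (v a) * v a) + cnj (v a) * w a"
        using a ww by (simp add: sum.delta)
      finally show "(\<Sum>b<d. cnj (v a) * ((if a = b then complex_of_real c else 0) + M a b) * v b) = \<dots>" .
    qed
    also have "\<dots> = complex_of_real c * complex_of_real (nr d v) + Q"
      unfolding nr_eq Q_def by (simp add: sum.distrib sum_distrib_left)
    finally show ?thesis .
  qed
  have 2: "complex_of_real (nr d w) = complex_of_real (s^2) * complex_of_real (nr d v)"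
  proof -
    have "complex_of_real (nr d w) = (\<Sum>a<d. \<Sum>b<d. \<Sum>e<d. cnj (v b) * v e * (M b a * M a e))"
      unfolding nr_eq w_def cnj_sum sum_product
      by (intro sum.cong refl) (simp add: hc algebra_simps)
    also have "\<dots> = (\<Sum>b<d. \<Sum>a<d. \<Sum>e<d. cnj (v b) * v e * (M b a * M a e))"
      by (rule sum.swap)
    also have "\<dots> = (\<Sum>b<d. \<Sum>e<d. \<Sum>a<d. cnj (v b) * v e * (M b a * M a e))"
      by (intro sum.cong refl sum.swap)
    also have "\<dots> = (\<Sum>b<d. \<Sum>e<d. cnj (v b) * v e * mm d M M b e)"
      unfolding mm_def by (simp add: sum_distrib_left)
    also have "\<dots> = (\<Sum>b<d. \<Sum>e<d. if b = e then complex_of_real (s^2) * (cnj (v b) * v b) else 0)"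
      by (intro sum.cong refl) (simp add: sq)
    also have "\<dots> = (\<Sum>b<d. complex_of_real (s^2) * (cnj (v b) * v b))"
      by (intro sum.cong refl) (simp add: sum.delta)
    also have "\<dots> = complex_of_real (s^2) * complex_of_real (nr d v)"
      unfolding nr_eq by (simp add: sum_distrib_left)
    finally show ?thesis .
  qed
  have key: "0 \<le> s * nr d v + Re Q"
  proof (cases "s = 0")
    case True
    then have "nr d w = 0" using 2 by simp
    then have "\<And>a. a < d \<Longrightarrow> w a = 0" using nr_zero by blast
    then have "Q = 0" unfolding Q_def by simp
    then show ?thesis using True by simp
  next
    case False
    then have sp: "0 < s" using s by simp
    define u where "u a = complex_of_real s * v a + w a" for a
    have cQ: "cnj Q = (\<Sum>a<d. cnj (w a) * v a)" unfolding Q_def by (simp add: mult.commute)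
    have pt: "cnj (u a) * u a = complex_of_real (s^2) * (cnj (v a) * v a)
       + complex_of_real s * (cnj (v a) * w a + cnj (w a) * v a) + cnj (w a) * w a" for a
      by (simp add: u_def algebra_simps power2_eq_square)
    have "complex_of_real (nr d u) = complex_of_real (s^2) * complex_of_real (nr d v)
          + complex_of_real s * (Q + cnj Q) + complex_of_real (nr d w)"
      unfolding nr_eq pt cQ unfolding Q_def
      by (simp only: sum.distrib sum_distrib_left distrib_left)
    then have "Re (complex_of_real (nr d u)) = Re (complex_of_real (s^2) * complex_of_real (nr d v)
          + complex_of_real s * (Q + cnj Q) + complex_of_real (nr d w))" by (rule arg_cong)
    then have nu: "nr d u = s^2 * nr d v + s * (2 * Re Q) + nr d w"
      by (simp add: algebra_simps)
    have nw: "nr d w = s^2 * nr d v" using 2 by (metis of_real_mult of_real_eq_iff)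
    have "nr d u = 2 * s * (s * nr d v + Re Q)" unfolding nu nw by (simp add: algebra_simps power2_eq_square)
    then have "0 \<le> 2 * s * (s * nr d v + Re Q)" using nr_nonneg[of d u] by simp
    then show ?thesis using sp by (simp add: zero_le_mult_iff)
  qed
  have "Re (complex_of_real c * complex_of_real (nr d v) + Q) = c * nr d v + Re Q" by simp
  moreover have "s * nr d v \<le> c * nr d v" using s nr_nonneg by (simp add: mult_right_mono)
  ultimately show ?thesis unfolding 1 using key by linarith
qed



context cliff begin

lemma mm_swap_tr: "(\<Sum>a<d. mm d A B a a) = (\<Sum>a<d. mm d B A a a)"
  unfolding mm_def by (subst sum.swap) (simp add: mult.commute)

lemma tr_prod:
  assumes k: "k \<le> K"
  shows "(\<Sum>a<d. mm d (\<lambda>a b. (if a = b then complex_of_real c1 else 0) + Mf G k y a b)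
                       (\<lambda>a b. (if a = b then complex_of_real c2 else 0) + Mf G k z a b) a a)
       = of_nat d * complex_of_real (c1 * c2 + (\<Sum>t<k. y t * z t))"
proof -
  let ?M = "Mf G k y" and ?N = "Mf G k z"
  have pt: "mm d (\<lambda>a b. (if a = b then complex_of_real c1 else 0) + ?M a b)
                 (\<lambda>a b. (if a = b then complex_of_real c2 else 0) + ?N a b) a a
     = complex_of_real (c1 * c2) + complex_of_real c1 * ?N a a + complex_of_real c2 * ?M a a + mm d ?M ?N a a"
    if a: "a < d" for a
  proof -
    have "mm d (\<lambda>a b. (if a = b then complex_of_real c1 else 0) + ?M a b)
                 (\<lambda>a b. (if a = b then complex_of_real c2 else 0) + ?N a b) a a
       = (\<Sum>b<d. if a = b then complex_of_real (c1 * c2) + complex_of_real c1 * ?N a a + complex_of_real c2 * ?M a a else 0)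
         + mm d ?M ?N a a"
      unfolding mm_def sum.distrib[symmetric] by (intro sum.cong refl) (auto simp: algebra_simps)
    also have "\<dots> = complex_of_real (c1 * c2) + complex_of_real c1 * ?N a a + complex_of_real c2 * ?M a a + mm d ?M ?N a a"
      using a by (simp add: sum.delta)
    finally show ?thesis .
  qed
  have sum2: "2 * (\<Sum>a<d. mm d ?M ?N a a) = of_nat d * (2 * complex_of_real (\<Sum>t<k. y t * z t))"
  proof -
    have "2 * (\<Sum>a<d. mm d ?M ?N a a) = (\<Sum>a<d. mm d ?M ?N a a) + (\<Sum>a<d. mm d ?N ?M a a)"
      using mm_swap_tr[of ?M ?N] by simp
    also have "\<dots> = (\<Sum>a<d. mm d ?M ?N a a + mm d ?N ?M a a)" by (simp add: sum.distrib)
    also have "\<dots> = (\<Sum>a<d. 2 * complex_of_real (\<Sum>t<k. y t * z t))"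
      using ac_Mf[OF k] by (intro sum.cong refl) simp
    finally show ?thesis by simp
  qed
  have "(\<Sum>a<d. mm d (\<lambda>a b. (if a = b then complex_of_real c1 else 0) + ?M a b)
                       (\<lambda>a b. (if a = b then complex_of_real c2 else 0) + ?N a b) a a)
     = of_nat d * complex_of_real (c1 * c2) + complex_of_real c1 * (\<Sum>a<d. ?N a a)
        + complex_of_real c2 * (\<Sum>a<d. ?M a a) + (\<Sum>a<d. mm d ?M ?N a a)"
    using pt by (simp add: sum.distrib sum_distrib_left)
  also have "\<dots> = of_nat d * complex_of_real (c1 * c2) + (\<Sum>a<d. mm d ?M ?N a a)"
    using tr_Mf[OF k] by simp
  also have "\<dots> = of_nat d * complex_of_real (c1 * c2 + (\<Sum>t<k. y t * z t))"
    using sum2 by (simp add: algebra_simps)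
  finally show ?thesis .
qed

lemma sq_Mf:
  assumes k: "k \<le> K" and ae: "a < d" "e < d"
  shows "mm d (Mf G k y) (Mf G k y) a e = (if a = e then complex_of_real (\<Sum>t<k. y t * y t) else 0)"
  using ac_Mf[OF k ae, of y y] by (auto split: if_splits)

end



theorem theorem4p8:
  fixes n :: nat and X :: "real mat"
  assumes "gram_lorentz n X"
  shows "cpsd n X \<and> cpsd_rank n X \<le> 2 ^ ((vec_space.rank n X + 1) div 2)"
proof -
  obtain m l where X: "X \<in> carrier_mat n n" and m: "m \<ge> 1" and lc: "\<forall>i<n. l i \<in> lorentz_cone m"
    and Xl: "\<forall>i<n. \<forall>j<n. X $$ (i,j) = l i \<bullet> l j"
    using assms unfolding gram_lorentz_def by blast
  define r where "r = vec_space.rank n X"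
  define L where "L i a = l i $ a" for i a
  have lcar: "l i \<in> carrier_vec m" if "i < n" for i using lc that unfolding lorentz_cone_def by auto
  have XL: "X $$ (i,j) = (\<Sum>a<m. L i a * L j a)" if "i < n" "j < n" for i j
    using Xl that lcar[OF that(2)] unfolding L_def scalar_prod_def by (auto simp: atLeast0LessThan)
  obtain S where S: "finite S" "S \<subseteq> set (cols X)" "card S = r"
    and Sc: "\<forall>i<n. \<exists>a. \<forall>k<n. X $$ (k,i) = (\<Sum>v\<in>S. a v * v $ k)"
    using rank_span_cols[OF X] unfolding r_def by blast
  obtain aco where aco: "\<And>i k. i<n \<Longrightarrow> k<n \<Longrightarrow> X $$ (k,i) = (\<Sum>v\<in>S. aco i v * v $ k)"
  proof -
    have "\<forall>i. \<exists>a. i < n \<longrightarrow> (\<forall>k<n. X $$ (k,i) = (\<Sum>v\<in>S. a v * v $ k))" using Sc by blast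
    then obtain f where "\<forall>i. i < n \<longrightarrow> (\<forall>k<n. X $$ (k,i) = (\<Sum>v\<in>S. f i v * v $ k))" by (metis choice)
    then show ?thesis using that by blast
  qed
  define ind where "ind v = (SOME j. j < n \<and> v = col X j)" for v
  have ind: "ind v < n \<and> v = col X (ind v)" if v: "v \<in> S" for v
  proof -
    have "v \<in> set (cols X)" using v S by blast
    then obtain j where "j < length (cols X)" "cols X ! j = v" by (metis in_set_conv_nth)
    then have "\<exists>j. j < n \<and> v = col X j" using X by auto
    then show ?thesis unfolding ind_def by (rule someI_ex)
  qed
  have vk: "v $ k = X $$ (k, ind v)" if "v \<in> S" "k < n" for v k
    using ind[OF that(1)] that X by (metis carrier_matD(1) carrier_matD(2) index_col)
  have span: "L i a = (\<Sum>v\<in>S. aco i v * L (ind v) a)" if i: "i < n" and a: "a < m" for i a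
  proof (rule gram_span[OF S(1) _ i _ a])
    show "ind v < n" if "v \<in> S" for v using ind that by blast
    fix k assume k: "k < n"
    have "(\<Sum>a<m. L k a * L i a) = X $$ (k,i)" using XL k i by simp
    also have "\<dots> = (\<Sum>v\<in>S. aco i v * X $$ (k, ind v))" using aco[OF i k] vk k by simp
    also have "\<dots> = (\<Sum>v\<in>S. aco i v * (\<Sum>a<m. L k a * L (ind v) a))"
      using XL k ind by simp
    finally show "(\<Sum>a<m. L k a * L i a) = (\<Sum>v\<in>S. aco i v * (\<Sum>a<m. L k a * L (ind v) a))" .
  qed
  define x where "x i a = (if a = 0 then 0 else L i a)" for i a
  have xspan: "x i a = (\<Sum>v\<in>S. aco i v * x (ind v) a)" if i: "i < n" and a: "a < m" for i a
    using span[OF i a] unfolding x_def by simp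
  obtain h where h: "bij_betw h {..<r} S"
    using ex_bij_betw_nat_finite[OF S(1)] S(3) by (auto simp: atLeast0LessThan)
  define w where "w t a = x (ind (h t)) a" for t a
  have xw: "x i a = (\<Sum>t<r. aco i (h t) * w t a)" if i: "i < n" and a: "a < m" for i a
    unfolding xspan[OF i a] w_def using sum.reindex_bij_betw[OF h, of "\<lambda>v. aco i v * x (ind v) a"] by simp
  obtain u \<gamma> where orth: "\<And>s t. s<r \<Longrightarrow> t<r \<Longrightarrow> s \<noteq> t \<Longrightarrow> (\<Sum>a<m. u s a * u t a) = 0"
    and wu: "\<And>j a. j<r \<Longrightarrow> a<m \<Longrightarrow> w j a = (\<Sum>t<r. \<gamma> j t * u t a)"
    using gs[of r m w] by blast
  define \<beta> where "\<beta> i t = (\<Sum>t'<r. aco i (h t') * \<gamma> t' t)" for i t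
  have xu: "x i a = (\<Sum>t<r. \<beta> i t * u t a)" if i: "i < n" and a: "a < m" for i a
  proof -
    have "x i a = (\<Sum>t'<r. \<Sum>t<r. aco i (h t') * \<gamma> t' t * u t a)"
      unfolding xw[OF i a] using wu a by (simp add: sum_distrib_left mult.assoc)
    also have "\<dots> = (\<Sum>t<r. \<beta> i t * u t a)"
      unfolding \<beta>_def by (subst sum.swap) (simp add: sum_distrib_right)
    finally show ?thesis .
  qed
  define y where "y i t = \<beta> i t * sqrt (\<Sum>a<m. u t a * u t a)" for i t
  have gramx: "(\<Sum>a<m. x i a * x j a) = (\<Sum>t<r. y i t * y j t)" if "i < n" "j < n" for i j
  proof -
    have nn: "0 \<le> (\<Sum>a<m. u t a * u t a)" for t by (simp add: sum_nonneg)
    have "(\<Sum>a<m. x i a * x j a) = (\<Sum>t<r. \<beta> i t * \<beta> j t * (\<Sum>a<m. u t a * u t a))"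
      by (rule orth_coords[OF orth]) (use xu that in auto)
    also have "\<dots> = (\<Sum>t<r. y i t * y j t)"
      unfolding y_def using nn by (intro sum.cong refl) (simp add: algebra_simps)
    finally show ?thesis .
  qed
  define c where "c i = L i 0" for i
  have Xcy: "X $$ (i,j) = c i * c j + (\<Sum>t<r. y i t * y j t)" if ij: "i < n" "j < n" for i j
  proof -
    have "X $$ (i,j) = (\<Sum>a<m. (if a = 0 then c i * c j else 0) + x i a * x j a)"
      unfolding XL[OF ij] by (intro sum.cong refl) (auto simp: x_def c_def)
    also have "\<dots> = c i * c j + (\<Sum>a<m. x i a * x j a)"
      using m by (simp add: sum.distrib sum.delta')
    finally show ?thesis using gramx[OF ij] by simp
  qed
  define q where "q i = (\<Sum>t<r. y i t * y i t)" for i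
  have cone: "0 \<le> c i \<and> sqrt (q i) \<le> c i" if i: "i < n" for i
  proof -
    have cone0: "sqrt (\<Sum>a\<in>{1..<m}. (L i a)^2) \<le> c i"
      using lc i unfolding lorentz_cone_def L_def c_def by auto
    have "(\<Sum>a<m. x i a * x i a) = (\<Sum>a\<in>{1..<m}. (L i a)^2)"
      by (rule sum.mono_neutral_cong_right) (auto simp: x_def power2_eq_square)
    then have qeq: "q i = (\<Sum>a\<in>{1..<m}. (L i a)^2)" unfolding q_def using gramx[OF i i] by simp
    have s0: "0 \<le> sqrt (\<Sum>a\<in>{1..<m}. (L i a)^2)" by (simp add: sum_nonneg)
    show ?thesis
    proof
      show "0 \<le> c i" using s0 cone0 by linarith
      show "sqrt (q i) \<le> c i" using cone0 qeq by simp
    qed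
  qed
  have qnn: "0 \<le> q i" for i unfolding q_def by (simp add: sum_nonneg)
  define p where "p = (r + 1) div 2"
  define d :: nat where "d = 2 ^ p"
  have rp: "r \<le> 2 * p" unfolding p_def by simp
  have dpos: "0 < d" unfolding d_def by simp
  interpret cliff "gens p" d "2 * p"
    using gens_props[of p] herm_gens unfolding d_def by unfold_locales auto
  define N where "N i a b = (if a = b then complex_of_real (c i) else 0) + Mf (gens p) r (y i) a b" for i a b
  define P where "P i = mat d d (\<lambda>(a,b). N i a b / complex_of_real (sqrt (real d)))" for i
  have hermN: "cnj (N i a b) = N i b a" for i a b
    using herm_Mf[of "gens p" r "y i", OF hermG] unfolding N_def herm_def by auto
  have hp: "herm_psd d (P i)" if i: "i < n" for i
    unfolding herm_psd_def
  proof (intro conjI allI impI ballI)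
    show "P i \<in> carrier_mat d d" unfolding P_def by simp
    fix a b assume "a < d" "b < d"
    then show "P i $$ (a, b) = cnj (P i $$ (b, a))" unfolding P_def using hermN by simp
  next
    fix v :: "complex vec" assume v: "v \<in> carrier_vec d"
    have sq: "mm d (Mf (gens p) r (y i)) (Mf (gens p) r (y i)) a e =
       (if a = e then complex_of_real ((sqrt (q i))^2) else 0)" if "a < d" "e < d" for a e
      using sq_Mf[OF rp that] qnn unfolding q_def by simp
    have core: "0 \<le> Re (\<Sum>a<d. \<Sum>b<d. cnj (v $ a) * ((if a = b then complex_of_real (c i) else 0)
             + Mf (gens p) r (y i) a b) * v $ b)"
      by (rule psd_core[OF herm_Mf[OF hermG] sq]) (use cone[OF i] qnn in auto)
    have "(\<Sum>a<d. \<Sum>b<d. cnj (v $ a) * P i $$ (a, b) * v $ b)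
       = (\<Sum>a<d. \<Sum>b<d. cnj (v $ a) * N i a b * v $ b) / complex_of_real (sqrt (real d))"
      unfolding P_def by (simp add: sum_divide_distrib)
    then show "0 \<le> Re (\<Sum>a<d. \<Sum>b<d. cnj (v $ a) * P i $$ (a, b) * v $ b)"
      using core dpos unfolding N_def by (simp add: Re_divide_of_real)
  qed
  have tr: "complex_of_real (X $$ (i,j)) = (\<Sum>k<d. (P i * P j) $$ (k,k))" if ij: "i < n" "j < n" for i j
  proof -
    have sd: "complex_of_real (sqrt (real d)) * complex_of_real (sqrt (real d)) = of_nat d"
      unfolding of_real_mult[symmetric] by simp
    have "(\<Sum>k<d. (P i * P j) $$ (k,k)) = (\<Sum>k<d. \<Sum>b<d. N i k b * N j b k / (complex_of_real (sqrt (real d)) * complex_of_real (sqrt (real d))))"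
      unfolding P_def using dpos
      by (simp add: scalar_prod_def atLeast0LessThan)
    also have "\<dots> = (\<Sum>k<d. mm d (N i) (N j) k k) / of_nat d"
      unfolding sd mm_def by (simp add: sum_divide_distrib)
    also have "\<dots> = complex_of_real (c i * c j + (\<Sum>t<r. y i t * y j t))"
    proof -
      have Ni: "N i' = (\<lambda>a b. (if a = b then complex_of_real (c i') else 0) + Mf (gens p) r (y i') a b)" for i'
        by (simp add: N_def fun_eq_iff)
      have "(\<Sum>k<d. mm d (N i) (N j) k k) = of_nat d * complex_of_real (c i * c j + (\<Sum>t<r. y i t * y j t))"
        unfolding Ni by (rule tr_prod[OF rp])
      then show ?thesis using dpos by simp
    qed
    finally show ?thesis using Xcy[OF ij] by simp
  qed
  have cf: "cpsd_factor n d X"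
    unfolding cpsd_factor_def using dpos hp tr by (intro conjI exI[of _ P]) auto
  have "cpsd n X" unfolding cpsd_def using X cf by blast
  moreover have "cpsd_rank n X \<le> d" unfolding cpsd_rank_def by (rule Least_le) (rule cf)
  ultimately show ?thesis unfolding d_def p_def r_def by simp
qed

end
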